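(* Let $P$ be a finite geometric lattice of rank $n$ with a fixed atom ordering, and let $S=\{s_1<\dots<s_r\}\subseteq\{1,\dots,n-1\}$. Then for every filling $F$ of the ribbon $\mathrm{Rib}(s_1,s_2-s_1,\dots,n-s_r)$ whose entries are the elements of a basis of the matroid of $P$ (that is, $n$ atoms whose join is $\hat1$), the alternating sum $\bar f_{chain}(v_F)$ of maximal chains of $P^S$ is a cycle: its boundary in the chain complex of the order complex of $P^S$ is $0$.
   Context: $P^S$ is the subposet of elements with ranks in $S$; its order complex has simplices the chains, oriented in increasing order, with boundary $d(u_1<\dots<u_k)=\sum_{i}(-1)^{i-1}(u_1<\dots<\widehat{u_i}<\dots<u_k)$. $\mathrm{Rib}(r_1,\dots,r_m)$ is the ribbon (connected skew shape with no $2\times2$ square) with rows of lengths $r_1,\dots,r_m$ from bottom to top, each row beginning directly above the last box of the row below. The reading word $(F_1,\dots,F_n)$ of a filling lists entries left to right in each row, rows bottom to top. The tabloid $\{F\}$ is $F$ modulo permutations of entries within rows; $v_F=\sum_{\sigma\in\mathrm{Col}_F}\mathrm{sgn}(\sigma)\{\sigma F\}$ where $\mathrm{Col}_F$ consists of permutations of the entries preserving each column. $\bar f_{chain}(\{F\})$ is the maximal chain $F_1\vee\dots\vee F_{s_1}<F_1\vee\dots\vee F_{s_2}<\dots<F_1\vee\dots\vee F_{s_r}$ of $P^S$, extended linearly. *)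

theory Defs
  imports "HOL-Combinatorics.Permutations"
begin

(* Lattice notions. A finite lattice is modelled as a type of class
   {finite, complete_lattice} (a finite nonempty lattice is complete). *)

definition covers :: "'a::order \<Rightarrow> 'a \<Rightarrow> bool" where
  "covers x y \<longleftrightarrow> x < y \<and> \<not> (\<exists>z. x < z \<and> z < y)"

definition atom :: "'a::complete_lattice \<Rightarrow> bool" where
  "atom a \<longleftrightarrow> covers bot a"

definition geometric_lattice :: "'a::{finite,complete_lattice} itself \<Rightarrow> bool" where
  "geometric_lattice _ \<longleftrightarrow>
     (\<forall>x::'a. x = Sup {a. atom a \<and> a \<le> x}) \<and>
     (\<forall>x y::'a. covers (inf x y) x \<longrightarrow> covers y (sup x y))"

definition lrank :: "'a::{finite,complete_lattice} \<Rightarrow> nat" where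
  "lrank x = Max {length xs | xs. sorted_wrt (<) xs \<and> (\<forall>y\<in>set xs. bot < y \<and> y \<le> x)}"

(* Ribbon Rib(s_1, s_2-s_1, ..., n-s_r), boxes indexed by reading-word position p = 1..n.
   Box p lies in row card{q\<in>S. q<p} (rows counted from the bottom, starting at 0)
   and in column p - card{q\<in>S. q<p}: each row starts directly above the last box
   of the previous row. *)
definition rib_col :: "nat set \<Rightarrow> nat \<Rightarrow> nat" where
  "rib_col S p = p - card {q\<in>S. q < p}"

definition col_perms :: "nat set \<Rightarrow> nat \<Rightarrow> (nat \<Rightarrow> nat) set" where
  "col_perms S n = {\<sigma>. \<sigma> permutes {1..n} \<and> (\<forall>p\<in>{1..n}. rib_col S (\<sigma> p) = rib_col S p)}"

(* f_chain of the tabloid of a filling G (G p = entry in box p):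
   the chain G_1 v...v G_{s_1} < ... < G_1 v...v G_{s_r}, as an increasing list *)
definition f_chain :: "nat set \<Rightarrow> (nat \<Rightarrow> 'a::complete_lattice) \<Rightarrow> 'a list" where
  "f_chain S G = map (\<lambda>k. Sup (G ` {1..k})) (sorted_list_of_set S)"

(* Chains of the free abelian group on simplices are represented as
   coefficient functions 'a list \<Rightarrow> int. *)
definition del_nth :: "nat \<Rightarrow> 'a list \<Rightarrow> 'a list" where
  "del_nth i xs = take i xs @ drop (Suc i) xs"

definition bd_simplex :: "'a list \<Rightarrow> 'a list \<Rightarrow> int" where
  "bd_simplex c = (\<lambda>c'. \<Sum>i<length c. (-1) ^ i * (if del_nth i c = c' then 1 else 0))"

definition f_chain_vF :: "nat set \<Rightarrow> nat \<Rightarrow> (nat \<Rightarrow> 'a::complete_lattice) \<Rightarrow> 'a list \<Rightarrow> int" where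
  "f_chain_vF S n F = (\<lambda>c. \<Sum>\<sigma>\<in>col_perms S n. sign \<sigma> * (if f_chain S (F \<circ> \<sigma>) = c then 1 else 0))"

definition bd_f_chain_vF :: "nat set \<Rightarrow> nat \<Rightarrow> (nat \<Rightarrow> 'a::complete_lattice) \<Rightarrow> 'a list \<Rightarrow> int" where
  "bd_f_chain_vF S n F = (\<lambda>c'. \<Sum>\<sigma>\<in>col_perms S n. sign \<sigma> * bd_simplex (f_chain S (F \<circ> \<sigma>)) c')"

end

theory Submission
  imports Defs
begin

lemma invol_sum_zero:
  fixes f :: "'b \<Rightarrow> int"
  assumes "\<And>x. x \<in> A \<Longrightarrow> g x \<in> A" "\<And>x. x \<in> A \<Longrightarrow> g (g x) = x"
    and "\<And>x. x \<in> A \<Longrightarrow> f (g x) = - f x"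
  shows "sum f A = 0"
proof -
  have bij: "bij_betw g A A"
    by (rule bij_betwI[where g=g]) (use assms in auto)
  have "sum f A = sum (f \<circ> g) A"
    using sum.reindex_bij_betw[OF bij, of f] by simp
  also have "\<dots> = - sum f A"
    using assms(3) by (simp add: sum_negf[symmetric])
  finally show ?thesis by simp
qed

lemma del_nth_map: "del_nth i (map f xs) = map f (del_nth i xs)"
  by (simp add: del_nth_def take_map drop_map)

lemma del_nth_set_distinct:
  assumes "distinct xs" "i < length xs" "x \<in> set (del_nth i xs)"
  shows "x \<in> set xs \<and> x \<noteq> xs ! i"
proof -
  have e: "xs = take i xs @ xs ! i # drop (Suc i) xs"
    using assms(2) by (simp add: id_take_nth_drop)
  have "distinct (take i xs @ xs ! i # drop (Suc i) xs)" using assms(1) e by metis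
  then show ?thesis using assms(3) unfolding del_nth_def
  proof -
    have "x \<in> set (take i xs) \<or> x \<in> set (drop (Suc i) xs)"
      using assms(3) by (simp add: del_nth_def)
    moreover have "xs ! i \<notin> set (take i xs)" "xs ! i \<notin> set (drop (Suc i) xs)"
      using \<open>distinct (take i xs @ xs ! i # drop (Suc i) xs)\<close> by auto
    ultimately show ?thesis by (auto dest: in_set_dropD in_set_takeD)
  qed
qed

lemma transpose_image_interval:
  assumes "k' \<noteq> (k::nat)" "1 \<le> k"
  shows "Transposition.transpose k (Suc k) ` {1..k'} = {1..k'}"
proof -
  have h: "Transposition.transpose k (Suc k) x \<in> {1..k'} \<longleftrightarrow> x \<in> {1..k'}" for x
  proof (cases "x = k")
    case True then show ?thesis using assms by (simp; arith)
  next
    case False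
    show ?thesis
    proof (cases "x = Suc k")
      case True then show ?thesis using assms by (simp; arith)
    next
      case False2: False
      then show ?thesis using False by simp
    qed
  qed
  have "Transposition.transpose k (Suc k) ` {1..k'} \<subseteq> {1..k'}"
  proof
    fix y assume "y \<in> Transposition.transpose k (Suc k) ` {1..k'}"
    then obtain x where "x \<in> {1..k'}" "y = Transposition.transpose k (Suc k) x" by blast
    then show "y \<in> {1..k'}" using h[of x] by blast
  qed
  moreover have "{1..k'} \<subseteq> Transposition.transpose k (Suc k) ` {1..k'}"
  proof
    fix x assume "x \<in> {1..k'}"
    then have "Transposition.transpose k (Suc k) x \<in> {1..k'}"
      using h[of x] by blast
    then show "x \<in> Transposition.transpose k (Suc k) ` {1..k'}"
      by (metis image_eqI transpose_involutory)
  qed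
  ultimately show ?thesis by blast
qed

theorem proposition5p27:
  fixes S :: "nat set" and n :: nat and F :: "nat \<Rightarrow> 'a::{finite,complete_lattice}"
  assumes "geometric_lattice TYPE('a)"
    and "lrank (top::'a) = n"
    and "S \<subseteq> {1..n-1}"
    and "inj_on F {1..n}"
    and "\<forall>p\<in>{1..n}. atom (F p)"
    and "Sup (F ` {1..n}) = top"
  shows "bd_f_chain_vF S n F = (\<lambda>_. 0)"
proof
  fix c'
  define L where "L = sorted_list_of_set S"
  define C where "C = col_perms S n"
  have finS: "finite S" using assms(3) finite_subset by blast
  have distL: "distinct L" and setL: "set L = S" and lenL: "length L = card S"
    using finS by (auto simp: L_def)
  have finC: "finite C"
  proof -
    have "C \<subseteq> {\<sigma>. \<sigma> permutes {1..n}}" by (auto simp: C_def col_perms_def)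
    then show ?thesis using finite_permutations[of "{1..n::nat}"] finite_subset by blast
  qed
  have len: "length (f_chain S G) = card S" for G :: "nat \<Rightarrow> 'a"
    by (simp add: f_chain_def)
  have "bd_f_chain_vF S n F c' =
      (\<Sum>\<sigma>\<in>C. \<Sum>i<card S. sign \<sigma> * ((-1) ^ i *
          (if del_nth i (f_chain S (F \<circ> \<sigma>)) = c' then 1 else 0)))"
    by (simp add: bd_f_chain_vF_def bd_simplex_def len C_def sum_distrib_left)
  also have "\<dots> = (\<Sum>i<card S. \<Sum>\<sigma>\<in>C. sign \<sigma> * ((-1) ^ i *
          (if del_nth i (f_chain S (F \<circ> \<sigma>)) = c' then 1 else 0)))"
    by (rule sum.swap)
  also have "\<dots> = 0"
  proof (rule sum.neutral, rule ballI)
    fix i assume "i \<in> {..<card S}"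
    then have i: "i < length L" using lenL by simp
    define k where "k = L ! i"
    have kS: "k \<in> S" using i setL k_def by auto
    have "k \<in> {1..n-1}" using assms(3) kS by blast
    then have k1: "1 \<le> k" and kn: "Suc k \<le> n" by auto
    define \<tau> where "\<tau> = Transposition.transpose k (Suc k)"
    have tperm: "\<tau> permutes {1..n}" unfolding \<tau>_def
      using k1 kn by (intro permutes_swap_id) auto
    have colk: "rib_col S (Suc k) = rib_col S k"
    proof -
      have "{q\<in>S. q < Suc k} = insert k {q\<in>S. q < k}" using kS by auto
      moreover have "finite {q\<in>S. q < k}" by simp
      ultimately have "card {q\<in>S. q < Suc k} = Suc (card {q\<in>S. q < k})" by simp
      then show ?thesis by (simp add: rib_col_def)
    qed
    have tcol: "rib_col S (\<tau> p) = rib_col S p" for p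
      unfolding \<tau>_def using colk
      by (cases "p = k"; cases "p = Suc k") auto
    have g_in: "\<sigma> \<circ> \<tau> \<in> C" if "\<sigma> \<in> C" for \<sigma>
    proof -
      have sp: "\<sigma> permutes {1..n}" and sc: "\<forall>p\<in>{1..n}. rib_col S (\<sigma> p) = rib_col S p"
        using that by (auto simp: C_def col_perms_def)
      have "\<tau> p \<in> {1..n}" if "p \<in> {1..n}" for p
        using that by (simp only: permutes_in_image[OF tperm])
      then show ?thesis using sp sc tcol permutes_compose[OF tperm sp]
        by (auto simp: C_def col_perms_def)
    qed
    have sgn: "sign (\<sigma> \<circ> \<tau>) = - sign \<sigma>" if "\<sigma> \<in> C" for \<sigma>
    proof -
      have "\<sigma> permutes {1..n}" using that by (auto simp: C_def col_perms_def)
      then have "permutation \<sigma>" using permutes_imp_permutation by blast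
      moreover have "permutation \<tau>" using tperm permutes_imp_permutation by blast
      ultimately show ?thesis
        by (simp add: sign_compose \<tau>_def sign_swap_id)
    qed
    have same: "del_nth i (f_chain S (F \<circ> (\<sigma> \<circ> \<tau>))) = del_nth i (f_chain S (F \<circ> \<sigma>))" for \<sigma>
    proof -
      have "\<And>k'. k' \<in> set (del_nth i L) \<Longrightarrow>
          Sup ((F \<circ> (\<sigma> \<circ> \<tau>)) ` {1..k'}) = Sup ((F \<circ> \<sigma>) ` {1..k'})"
      proof -
        fix k' assume "k' \<in> set (del_nth i L)"
        then have "k' \<noteq> k" using del_nth_set_distinct[OF distL i] k_def by blast
        then have "\<tau> ` {1..k'} = {1..k'}" unfolding \<tau>_def using k1 by (rule transpose_image_interval)
        then show "Sup ((F \<circ> (\<sigma> \<circ> \<tau>)) ` {1..k'}) = Sup ((F \<circ> \<sigma>) ` {1..k'})"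
        proof -
          have "(F \<circ> (\<sigma> \<circ> \<tau>)) ` {1..k'} = (F \<circ> \<sigma>) ` (\<tau> ` {1..k'})"
            by (simp add: image_comp comp_assoc)
          then show ?thesis using \<open>\<tau> ` {1..k'} = {1..k'}\<close> by simp
        qed
      qed
      then show ?thesis
        unfolding f_chain_def L_def[symmetric] del_nth_map by simp
    qed
    have invol: "\<sigma> \<circ> \<tau> \<circ> \<tau> = \<sigma>" for \<sigma>
      by (simp add: \<tau>_def comp_assoc)
    show "(\<Sum>\<sigma>\<in>C. sign \<sigma> * ((-1) ^ i *
          (if del_nth i (f_chain S (F \<circ> \<sigma>)) = c' then 1 else 0))) = (0::int)"
    proof (rule invol_sum_zero[where g="\<lambda>\<sigma>. \<sigma> \<circ> \<tau>"])
      fix \<sigma> assume s: "\<sigma> \<in> C"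
      show "\<sigma> \<circ> \<tau> \<in> C" using g_in[OF s] .
      show "\<sigma> \<circ> \<tau> \<circ> \<tau> = \<sigma>" by (rule invol)
      show "sign (\<sigma> \<circ> \<tau>) * ((-1) ^ i *
          (if del_nth i (f_chain S (F \<circ> (\<sigma> \<circ> \<tau>))) = c' then 1 else 0)) =
        - (sign \<sigma> * ((-1) ^ i *
          (if del_nth i (f_chain S (F \<circ> \<sigma>)) = c' then 1 else 0)))"
        unfolding sgn[OF s] same by (simp only: mult_minus_left)
    qed
  qed
  finally show "bd_f_chain_vF S n F c' = 0" .
qed

end
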